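(* For non-zero integers $a,b$ let $f_{a,b}:(0,\infty)\to(0,\infty)$, $f_{a,b}(z)=z^{a/b}$ (real positive branch). Let $I\subseteq(0,\infty)$ have non-empty interior. Then there exist uncountably many $\zeta\in\mathscr{L}\cap(0,\infty)$ such that $f_{a,b}(\zeta)\in\mathscr{L}$ simultaneously for all non-zero integers $a,b$. Moreover, for any fixed non-zero integers $a,b$, there are uncountably many $\zeta\in\mathscr{L}\cap I$ with $f_{a,b}(\zeta)\in\mathscr{L}$.
   Context: $\mathscr{L}$ is the set of Liouville numbers (real irrational $\zeta$ such that for every $\eta>0$ there are infinitely many rationals $y/x$, $x\geq1$, with $|\zeta-y/x|\leq x^{-\eta}$). *)

theory Defs
  imports "HOL-Analysis.Analysis"
begin

definition liouville_set :: "real set" where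
  "liouville_set = {\<zeta>. \<zeta> \<notin> \<rat> \<and>
     (\<forall>\<eta>::real. \<eta> > 0 \<longrightarrow>
        infinite {(y::int, x::int). x \<ge> 1 \<and>
                    \<bar>\<zeta> - of_int y / of_int x\<bar> \<le> (of_int x) powr (- \<eta>)})}"

end

theory Submission imports Defs begin

lemma baire_ball:
  fixes \<G> :: "real set set"
  assumes cG: "countable \<G>" and oG: "\<And>T. T\<in>\<G> \<Longrightarrow> open T \<and> closure T = UNIV" and e: "e>0"
  shows "uncountable {z \<in> ball c e. \<forall>T\<in>\<G>. z \<in> T}"
proof
  define X where "X = {z \<in> ball c e. \<forall>T\<in>\<G>. z \<in> T}"
  assume "countable {z \<in> ball c e. \<forall>T\<in>\<G>. z \<in> T}"
  hence cX: "countable X" by (simp add: X_def)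
  define H where "H = (\<lambda>T. T \<union> - cball c (e/2)) ` \<G> \<union> (\<lambda>x. - {x}) ` X"
  have cH: "countable H" using cG cX by (simp add: H_def)
  have "UNIV \<subseteq> closure (\<Inter>H)"
  proof (rule Baire[OF closed_UNIV cH])
    fix T assume "T \<in> H"
    then consider U where "U \<in> \<G>" "T = U \<union> - cball c (e/2)" | x where "T = - {x}"
      unfolding H_def by blast
    then show "openin (top_of_set UNIV) T \<and> UNIV \<subseteq> closure T"
    proof cases
      case 1
      then have "open T" using oG by auto
      moreover have "closure U \<subseteq> closure T" using 1 by (simp add: closure_mono)
      ultimately show ?thesis using oG 1 by auto
    next
      case 2
      then show ?thesis by (simp add: closure_complement open_Compl)
    qed
  qed
  hence "c \<in> closure (\<Inter>H)" by auto
  then obtain y where y: "y \<in> \<Inter>H" "dist y c < e/2"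
    using e unfolding closure_approachable by (metis half_gt_zero)
  have "y \<in> cball c (e/2)" using y(2) by (simp add: dist_commute)
  have "\<forall>T\<in>\<G>. y \<in> T"
  proof (rule ballI)
    fix T assume "T \<in> \<G>"
    hence "T \<union> - cball c (e/2) \<in> H" unfolding H_def by blast
    hence "y \<in> T \<union> - cball c (e/2)" using y(1) by blast
    thus "y \<in> T" using \<open>y \<in> cball c (e/2)\<close> by blast
  qed
  moreover have "y \<in> ball c e" using y(2) e by (simp add: dist_commute)
  ultimately have "y \<in> X" by (simp add: X_def)
  hence "- {y} \<in> H" unfolding H_def by blast
  hence "y \<in> - {y}" using y(1) by blast
  thus False by simp
qed

definition Gs :: "nat \<Rightarrow> real set" where
 "Gs n = (\<Union>(p,q)\<in>{(p::int,q::int). q \<ge> 2}. ball (of_int p / of_int q) (1 / of_int q ^ n) - {of_int p / of_int q})"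

lemma Gs_mem: "z \<in> Gs n \<longleftrightarrow> (\<exists>p q::int. q \<ge> 2 \<and> z \<noteq> of_int p/of_int q \<and> \<bar>z - of_int p/of_int q\<bar> < 1/of_int q^n)"
  unfolding Gs_def by (auto simp: dist_real_def abs_minus_commute)

lemma Gs_open: "open (Gs n)"
  unfolding Gs_def by (intro open_UN ballI) (auto intro!: open_Diff)

lemma Gs_dense: "closure (Gs n) = UNIV"
proof -
  have "x \<in> closure (Gs n)" for x
  proof (unfold closure_approachable, intro allI impI)
    fix \<epsilon> :: real assume ep: "\<epsilon> > 0"
    define q :: int where "q = \<lceil>2/\<epsilon>\<rceil> + 2"
    have "2/\<epsilon> > 0" using ep by simp
    hence q2: "q \<ge> 2" unfolding q_def by linarith
    have qe: "real_of_int q > 2/\<epsilon>" unfolding q_def by linarith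
    hence "2 < \<epsilon> * real_of_int q" using ep by (simp add: field_simps)
    hence q1: "1/real_of_int q < \<epsilon>/2" using q2 by (simp add: field_simps)
    define p where "p = \<lfloor>x * q\<rfloor>"
    have "p \<le> x*q" "x*q < p+1" unfolding p_def by linarith+
    have qp: "real_of_int q > 0" using q2 by simp
    have eq: "x - p/q = (x*q - p)/q" using qp by (simp add: field_simps)
    have d1: "0 \<le> x - p/q" "x - p/q < 1/q"
      unfolding eq using qp \<open>p \<le> x*q\<close> \<open>x*q < p+1\<close>
      by (auto intro!: divide_nonneg_pos divide_strict_right_mono)
    define \<delta> where "\<delta> = min (\<epsilon>/4) (1/real_of_int q^n/2)"
    have dp: "\<delta> > 0" using ep q2 by (simp add: \<delta>_def)
    have qn: "1/real_of_int q^n > 0" using qp by simp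
    have "\<delta> \<le> (1/real_of_int q^n)/2" unfolding \<delta>_def by simp
    have gen: "\<And>a b::real. a \<le> b/2 \<Longrightarrow> 0 < b \<Longrightarrow> a < b" by linarith
    have dl: "\<delta> < 1/real_of_int q^n" by (rule gen[OF \<open>\<delta> \<le> _\<close> qn])
    have "q \<ge> 2 \<and> p/q + \<delta> \<noteq> of_int p/of_int q \<and> \<bar>(p/q + \<delta>) - of_int p/of_int q\<bar> < 1/of_int q^n"
      using q2 dp dl by simp
    hence "p/q + \<delta> \<in> Gs n"
      unfolding Gs_mem by blast
    moreover have "\<delta> \<le> \<epsilon>/4" unfolding \<delta>_def by simp
    moreover have "dist (p/q + \<delta>) x < \<epsilon>"
      using d1 q1 dp \<open>\<delta> \<le> \<epsilon>/4\<close> unfolding dist_real_def abs_less_iff by linarith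
    ultimately show "\<exists>y\<in>Gs n. dist y x < \<epsilon>" by blast
  qed
  thus ?thesis by auto
qed

lemma Gs_irrat:
  assumes "\<forall>n. z \<in> Gs n" shows "z \<notin> \<rat>"
proof
  assume "z \<in> \<rat>"
  then obtain a b :: int where b: "b > 0" "z = of_int a / of_int b" by (rule Rats_cases')
  define n where "n = Suc (nat b)"
  from assms obtain p q :: int where pq: "q \<ge> 2" "z \<noteq> of_int p/of_int q" "\<bar>z - of_int p/of_int q\<bar> < 1/of_int q^n"
    unfolding Gs_mem by blast
  have qp: "real_of_int q > 0" "real_of_int b > 0" using pq b by auto
  have ne: "a*q - p*b \<noteq> 0"
  proof
    assume "a*q - p*b = 0"
    hence "real_of_int a * of_int q = of_int p * of_int b" by (metis eq_iff_diff_eq_0 of_int_eq_iff of_int_mult)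
    hence "z = of_int p/of_int q" using qp b by (simp add: frac_eq_eq mult.commute)
    thus False using pq by simp
  qed
  have eq: "z - of_int p/of_int q = of_int (a*q - p*b) / (of_int b * of_int q)"
    using qp b by (simp add: field_simps)
  have ge1: "\<bar>real_of_int (a*q - p*b)\<bar> \<ge> 1" using ne by linarith
  have "\<bar>z - of_int p/of_int q\<bar> = \<bar>real_of_int (a*q - p*b)\<bar> / (of_int b * of_int q)"
    unfolding eq using qp by (simp add: abs_divide)
  also have "\<dots> \<ge> 1 / (of_int b * of_int q)"
    using ge1 qp by (intro divide_right_mono) auto
  finally have "1 / (real_of_int b * of_int q) < 1 / of_int q ^ n" using pq(3) by linarith
  hence "real_of_int q ^ n < of_int b * of_int q"
    using qp by (simp add: divide_less_eq field_simps)
  hence "real_of_int q * of_int q ^ nat b < of_int b * of_int q" by (simp add: n_def)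
  hence "real_of_int q ^ nat b < of_int b" using qp by simp
  hence lt: "q ^ nat b < b" by (metis of_int_less_iff of_int_power)
  have "int (nat b) < 2 ^ nat b" by (metis less_exp of_nat_less_iff of_nat_numeral of_nat_power)
  also have "(2::int) ^ nat b \<le> q ^ nat b" using pq(1) by (intro power_mono) auto
  finally show False using lt b by simp
qed

lemma Gs_liouville:
  assumes "\<forall>n. z \<in> Gs n" shows "z \<in> liouville_set"
proof -
  have irr: "z \<notin> \<rat>" using Gs_irrat[OF assms] .
  have "infinite {(y::int, x::int). x \<ge> 1 \<and> \<bar>z - of_int y / of_int x\<bar> \<le> (of_int x) powr (- \<eta>)}"
    if eta: "\<eta> > 0" for \<eta> :: real
  proof
    define S where "S = {(y::int, x::int). x \<ge> 1 \<and> \<bar>z - of_int y / of_int x\<bar> \<le> (of_int x) powr (- \<eta>)}"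
    assume "finite {(y::int, x::int). x \<ge> 1 \<and> \<bar>z - of_int y / of_int x\<bar> \<le> (of_int x) powr (- \<eta>)}"
    hence fin: "finite S" by (simp add: S_def)
    define d where "d = Min (insert 1 ((\<lambda>(y,x). \<bar>z - of_int y / of_int x\<bar>) ` S))"
    have posS: "\<bar>z - of_int y / of_int x\<bar> > 0" if "(y,x) \<in> S" for y x
    proof -
      have "of_int y / of_int x \<in> \<rat>" by simp
      hence "z \<noteq> of_int y / of_int x" using irr by auto
      thus ?thesis by simp
    qed
    have dpos: "d > 0" unfolding d_def using fin posS by (subst Min_gr_iff) auto
    have dle: "d \<le> \<bar>z - of_int y / of_int x\<bar>" if "(y,x) \<in> S" for y x
      unfolding d_def using fin that by (intro Min_le) auto
    obtain N where N: "(1/2::real)^N < d" using real_arch_pow_inv[OF dpos, of "1/2"] by auto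
    define m where "m = N + nat \<lceil>\<eta>\<rceil>"
    have mge: "real m \<ge> \<eta>" unfolding m_def by linarith
    have "(1/2::real)^m \<le> (1/2)^N" unfolding m_def by (intro power_decreasing) auto
    with N have m2: "(1/2::real)^m < d" by linarith
    obtain p q :: int where pq: "q \<ge> 2" "z \<noteq> of_int p/of_int q" "\<bar>z - of_int p/of_int q\<bar> < 1/of_int q^m"
      using assms unfolding Gs_mem by blast
    have "1/real_of_int q^m \<le> 1/2^m" using pq(1)
      by (intro divide_left_mono power_mono) auto
    hence lt: "\<bar>z - of_int p/of_int q\<bar> < d" using pq(3) m2 by (simp add: power_one_over)
    have "1/real_of_int q^m = real_of_int q powr (- real m)"
      using pq(1) by (simp add: powr_minus powr_realpow divide_inverse)
    also have "\<dots> \<le> real_of_int q powr (- \<eta>)"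
      using pq(1) mge by (intro powr_mono) auto
    finally have "(p,q) \<in> S" unfolding S_def using pq by auto
    from dle[OF this] lt show False by linarith
  qed
  thus ?thesis unfolding liouville_set_def using irr by blast
qed

definition Hs :: "real \<Rightarrow> nat \<Rightarrow> real set" where
 "Hs r n = {z. z < 0} \<union> {z. 0 < z \<and> z powr r \<in> Gs n}"

lemma Hs_open: "open (Hs r n)"
proof -
  have eq: "{z. 0<z \<and> z powr r \<in> Gs n} = {0<..} \<inter> (\<lambda>z. z powr r) -` Gs n" by auto
  have "continuous_on {0<..} (\<lambda>z::real. z powr r)"
    by (intro continuous_intros) auto
  hence "open {z. 0<z \<and> z powr r \<in> Gs n}"
    unfolding eq by (intro continuous_open_preimage Gs_open) auto
  moreover have "open {z::real. z < 0}" using open_lessThan[of "0::real"] by (simp add: lessThan_def)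
  ultimately show ?thesis unfolding Hs_def by auto
qed

lemma Hs_dense:
  assumes r: "r \<noteq> 0" shows "closure (Hs r n) = UNIV"
proof -
  have "x \<in> closure (Hs r n)" for x
  proof (unfold closure_approachable, intro allI impI)
    fix \<epsilon> :: real assume ep: "\<epsilon> > 0"
    show "\<exists>y\<in>Hs r n. dist y x < \<epsilon>"
    proof (cases "x \<le> 0")
      case True
      hence "x - \<epsilon>/2 \<in> Hs r n" using ep unfolding Hs_def by auto
      moreover have "dist (x - \<epsilon>/2) x < \<epsilon>" using ep by (simp add: dist_real_def)
      ultimately show ?thesis by blast
    next
      case False
      define w0 where "w0 = x powr r"
      have w0p: "w0 > 0" using False by (simp add: w0_def)
      have "isCont (\<lambda>w::real. w powr (1/r)) w0"
        using w0p by (intro continuous_intros) auto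
      then obtain \<delta> where dp: "\<delta> > 0" and d: "\<And>w. dist w w0 < \<delta> \<Longrightarrow> dist (w powr (1/r)) (w0 powr (1/r)) < \<epsilon>"
        using ep unfolding continuous_at_eps_delta by blast
      have "w0 \<in> closure (Gs n)" using Gs_dense by simp
      then obtain w where w: "w \<in> Gs n" "dist w w0 < min \<delta> w0"
        using dp w0p unfolding closure_approachable by (metis min_less_iff_conj)
      have wp: "w > 0" using w(2) by (simp add: dist_real_def abs_less_iff)
      define y where "y = w powr (1/r)"
      have yp: "y > 0" using wp by (simp add: y_def)
      have "y powr r = w" using wp r by (simp add: y_def powr_powr)
      hence "y \<in> Hs r n" using yp w(1) unfolding Hs_def by auto
      moreover have "w0 powr (1/r) = x" using False r by (simp add: w0_def powr_powr)
      hence "dist y x < \<epsilon>" using d[of w] w(2) by (simp add: y_def)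
      ultimately show ?thesis by blast
    qed
  qed
  thus ?thesis by auto
qed

lemma main_ball:
  assumes e: "e > 0" and pos: "ball c e \<subseteq> {0<..}"
  shows "uncountable {\<zeta> \<in> liouville_set \<inter> ball c e.
            \<forall>a b :: int. a \<noteq> 0 \<longrightarrow> b \<noteq> 0 \<longrightarrow>
              \<zeta> powr (of_int a / of_int b) \<in> liouville_set}"
proof -
  define \<G> where "\<G> = (\<lambda>(a,b,n). Hs (of_int a / of_int b) n) ` {(a::int,b::int,n::nat). a \<noteq> 0 \<and> b \<noteq> 0}"
  have cG: "countable \<G>" unfolding \<G>_def by (intro countable_image) simp
  have oG: "open T \<and> closure T = UNIV" if "T \<in> \<G>" for T
    using that unfolding \<G>_def by (auto simp: Hs_open Hs_dense)
  have sub: "{z \<in> ball c e. \<forall>T\<in>\<G>. z \<in> T} \<subseteq> {\<zeta> \<in> liouville_set \<inter> ball c e.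
            \<forall>a b :: int. a \<noteq> 0 \<longrightarrow> b \<noteq> 0 \<longrightarrow>
              \<zeta> powr (of_int a / of_int b) \<in> liouville_set}"
  proof safe
    fix z assume z: "z \<in> ball c e" "\<forall>T\<in>\<G>. z \<in> T"
    have zp: "z > 0" using z pos by auto
    have key: "z powr (of_int a / of_int b) \<in> liouville_set" if "a \<noteq> 0" "b \<noteq> 0" for a b :: int
    proof (rule Gs_liouville, rule allI)
      fix n
      have "Hs (of_int a / of_int b) n \<in> \<G>" unfolding \<G>_def using that by force
      hence "z \<in> Hs (of_int a / of_int b) n" using z by blast
      thus "z powr (of_int a / of_int b) \<in> Gs n" using zp unfolding Hs_def by auto
    qed
    from key[of 1 1] show "z \<in> liouville_set" using zp by simp
    fix a b :: int assume "a \<noteq> 0" "b \<noteq> 0"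
    thus "z powr (of_int a / of_int b) \<in> liouville_set" using key by blast
  qed
  show ?thesis using baire_ball[OF cG oG e, of c] sub countable_subset by blast
qed

theorem theorem6p1:
  fixes I :: "real set"
  assumes "I \<subseteq> {0<..}" and "interior I \<noteq> {}"
  shows "uncountable {\<zeta> \<in> liouville_set \<inter> {0<..}.
            \<forall>a b :: int. a \<noteq> 0 \<longrightarrow> b \<noteq> 0 \<longrightarrow>
              \<zeta> powr (of_int a / of_int b) \<in> liouville_set}
       \<and> (\<forall>a b :: int. a \<noteq> 0 \<longrightarrow> b \<noteq> 0 \<longrightarrow>
            uncountable {\<zeta> \<in> liouville_set \<inter> I.
              \<zeta> powr (of_int a / of_int b) \<in> liouville_set})"
proof
  have b1: "ball (1::real) (1/2) \<subseteq> {0<..}"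
  proof
    fix y :: real assume "y \<in> ball 1 (1/2)"
    hence "\<bar>1 - y\<bar> < 1/2" by (simp add: dist_real_def)
    moreover have "1 - y \<le> \<bar>1 - y\<bar>" by (rule abs_ge_self)
    ultimately have "y > 0" by linarith
    thus "y \<in> {0<..}" by simp
  qed
  have "uncountable {\<zeta> \<in> liouville_set \<inter> ball 1 (1/2).
            \<forall>a b :: int. a \<noteq> 0 \<longrightarrow> b \<noteq> 0 \<longrightarrow>
              \<zeta> powr (of_int a / of_int b) \<in> liouville_set}" (is "uncountable ?A")
    by (rule main_ball[OF _ b1]) simp
  moreover have sub: "?A \<subseteq> {\<zeta> \<in> liouville_set \<inter> {0<..}.
            \<forall>a b :: int. a \<noteq> 0 \<longrightarrow> b \<noteq> 0 \<longrightarrow>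
              \<zeta> powr (of_int a / of_int b) \<in> liouville_set}" (is "_ \<subseteq> ?B") using b1 by auto
  ultimately show "uncountable ?B" using countable_subset[OF sub] by blast
next
  obtain x where "x \<in> interior I" using assms(2) by blast
  then obtain e where e: "e > 0" "ball x e \<subseteq> I" using mem_interior by blast
  have bp: "ball x e \<subseteq> {0<..}" using e assms(1) by blast
  show "\<forall>a b :: int. a \<noteq> 0 \<longrightarrow> b \<noteq> 0 \<longrightarrow>
            uncountable {\<zeta> \<in> liouville_set \<inter> I.
              \<zeta> powr (of_int a / of_int b) \<in> liouville_set}"
  proof (intro allI impI)
    fix a b :: int assume ab: "a \<noteq> 0" "b \<noteq> 0"
    have "uncountable {\<zeta> \<in> liouville_set \<inter> ball x e.
            \<forall>a b :: int. a \<noteq> 0 \<longrightarrow> b \<noteq> 0 \<longrightarrow>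
              \<zeta> powr (of_int a / of_int b) \<in> liouville_set}" (is "uncountable ?A")
      by (rule main_ball[OF e(1) bp])
    moreover have sub: "?A \<subseteq> {\<zeta> \<in> liouville_set \<inter> I.
              \<zeta> powr (of_int a / of_int b) \<in> liouville_set}" (is "_ \<subseteq> ?B") using e(2) ab by auto
    ultimately show "uncountable ?B" using countable_subset[OF sub] by blast
  qed
qed

end
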